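(* Fix a dimension $D\geqslant 2$. For any integer $r\geqslant 4$, any integer $m$ with $1\leqslant m\leqslant r/4$, and any integer $n$ with $2r m^{D-1}\leqslant n\leqslant r^D$, there is a subset $S$ of $n$ points of the integer grid $\{0,1,\dots,r-1\}^D$ such that $$\Delta(S, m^D-1)\geqslant \frac{r}{2m}-1.$$
   Context: For a graph $G$ whose vertices are points in $\mathbb{R}^D$, each edge $(u,v)$ has weight equal to the Euclidean distance $d(u,v)$ (edges may cross or overlap), and $d_G(u,v)$ is the length of a shortest path in $G$ between $u$ and $v$. The dilation of $G$ is $\Delta(G)=\max_{u\neq v\in V(G)} d_G(u,v)/d(u,v)$ (infinite if $G$ is disconnected). For a finite set $S$ of $n$ points and an integer $k\ge0$, $\Delta(S,k)$ is the minimum of $\Delta(G)$ over all graphs $G$ with vertex set exactly $S$ and exactly $n-1+k$ edges. *)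

theory Defs
  imports "HOL-Analysis.Analysis" "HOL-Library.Extended_Real"
begin

definition pairs_on :: "'a set \<Rightarrow> 'a set set" where
  "pairs_on S = {{u, v} | u v. u \<in> S \<and> v \<in> S \<and> u \<noteq> v}"

definition is_walk :: "'a set set \<Rightarrow> 'a list \<Rightarrow> 'a \<Rightarrow> 'a \<Rightarrow> bool" where
  "is_walk E p u v \<longleftrightarrow> p \<noteq> [] \<and> hd p = u \<and> last p = v \<and>
     (\<forall>i. Suc i < length p \<longrightarrow> {p ! i, p ! Suc i} \<in> E)"

definition walk_length :: "'a::metric_space list \<Rightarrow> real" where
  "walk_length p = (\<Sum>i<length p - 1. dist (p ! i) (p ! Suc i))"

text \<open>Shortest-path distance d_G(u,v); infinite if no path.\<close>
definition graph_dist :: "'a::metric_space set set \<Rightarrow> 'a \<Rightarrow> 'a \<Rightarrow> ereal" where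
  "graph_dist E u v = Inf {ereal (walk_length p) | p. is_walk E p u v}"

definition dilation :: "'a::metric_space set \<Rightarrow> 'a set set \<Rightarrow> ereal" where
  "dilation S E = Sup {graph_dist E u v / ereal (dist u v) | u v. u \<in> S \<and> v \<in> S \<and> u \<noteq> v}"

definition min_dilation :: "'a::metric_space set \<Rightarrow> nat \<Rightarrow> ereal" where
  "min_dilation S k = Inf {dilation S E | E. E \<subseteq> pairs_on S \<and> card E = card S - 1 + k}"

definition int_grid :: "nat \<Rightarrow> (real^'d) set" where
  "int_grid r = {x. \<forall>i. \<exists>j::nat. j < r \<and> x $ i = real j}"

end

theory Submission
  imports Defs
begin


definition conn :: "'a set set \<Rightarrow> 'a \<Rightarrow> 'a \<Rightarrow> bool" where
  "conn G u v \<longleftrightarrow> (\<exists>p. is_walk G p u v)"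

lemma is_walk_Nil[simp]: "\<not> is_walk G [] u v"
  by (simp add: is_walk_def)

lemma is_walk_single[simp]: "is_walk G [x] u v \<longleftrightarrow> x = u \<and> x = v"
  by (auto simp: is_walk_def)

lemma is_walk_Cons2[simp]:
  "is_walk G (x # y # rest) u v \<longleftrightarrow> x = u \<and> {x,y} \<in> G \<and> is_walk G (y # rest) y v"
proof
  assume H: "is_walk G (x # y # rest) u v"
  have "{x,y} \<in> G" using H unfolding is_walk_def by (metis One_nat_def length_Cons nth_Cons_0 nth_Cons_Suc zero_less_Suc Suc_less_eq)
  moreover have "is_walk G (y # rest) y v"
    unfolding is_walk_def
  proof (intro conjI allI impI)
    show "last (y # rest) = v" using H by (simp add: is_walk_def)
    fix i assume "Suc i < length (y # rest)"
    then have "Suc (Suc i) < length (x # y # rest)" by simp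
    then have "{(x # y # rest) ! Suc i, (x # y # rest) ! Suc (Suc i)} \<in> G" using H unfolding is_walk_def by blast
    then show "{(y # rest) ! i, (y # rest) ! Suc i} \<in> G" by simp
  qed simp_all
  ultimately show "x = u \<and> {x,y} \<in> G \<and> is_walk G (y # rest) y v" using H by (simp add: is_walk_def)
next
  assume H: "x = u \<and> {x,y} \<in> G \<and> is_walk G (y # rest) y v"
  show "is_walk G (x # y # rest) u v"
    unfolding is_walk_def
  proof (intro conjI allI impI)
    show "last (x # y # rest) = v" using H by (simp add: is_walk_def)
    fix i assume i: "Suc i < length (x # y # rest)"
    show "{(x # y # rest) ! i, (x # y # rest) ! Suc i} \<in> G"
    proof (cases i)
      case 0 then show ?thesis using H by auto
    next
      case (Suc j)
      then have "Suc j < length (y # rest)" using i by simp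
      then show ?thesis using H Suc unfolding is_walk_def by simp
    qed
  qed (use H in simp_all)
qed

lemma is_walk_hd: "is_walk G (x # p) u v \<Longrightarrow> x = u"
  by (simp add: is_walk_def)

lemma is_walk_front: "{u,y} \<in> G \<Longrightarrow> is_walk G p y v \<Longrightarrow> is_walk G (u # p) u v"
  by (cases p) (auto dest: is_walk_hd)

lemma conn_refl: "conn G u u"
  unfolding conn_def by (rule exI[of _ "[u]"]) simp

lemma conn_edge: "{x,y} \<in> G \<Longrightarrow> conn G x y"
  unfolding conn_def by (rule exI[of _ "[x,y]"]) simp

lemma walk_conn_trans: "is_walk G p u w \<Longrightarrow> conn G w v \<Longrightarrow> conn G u v"
proof (induction p arbitrary: u)
  case Nil then show ?case by simp
next
  case (Cons x p)
  show ?case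
  proof (cases p)
    case Nil then show ?thesis using Cons.prems Nil by auto
  next
    case (Cons y rest)
    then have "x = u" "{x,y} \<in> G" "is_walk G p y w" using Cons.prems by auto
    then have "conn G y v" using Cons.IH Cons.prems by blast
    then obtain q where "is_walk G q y v" by (auto simp: conn_def)
    then show ?thesis using \<open>x = u\<close> \<open>{x,y} \<in> G\<close> unfolding conn_def by (metis is_walk_front)
  qed
qed

lemma conn_trans: "conn G u w \<Longrightarrow> conn G w v \<Longrightarrow> conn G u v"
  by (meson conn_def walk_conn_trans)

lemma conn_sym: "conn G u v \<Longrightarrow> conn G v u"
proof -
  have "is_walk G p u v \<Longrightarrow> conn G v u" for p
  proof (induction p arbitrary: u)
    case Nil then show ?case by simp
  next
    case (Cons x p)
    show ?case
    proof (cases p)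
      case Nil then show ?thesis using Cons.prems Nil by (auto simp add: conn_refl)
    next
      case (Cons y rest)
      then have "x = u" "{x,y} \<in> G" "is_walk G p y v" using Cons.prems by auto
      then have "conn G v y" using Cons.IH by blast
      moreover have "conn G y u" using \<open>x = u\<close> \<open>{x,y} \<in> G\<close> by (metis conn_edge insert_commute)
      ultimately show ?thesis by (rule conn_trans)
    qed
  qed
  then show "conn G u v \<Longrightarrow> conn G v u" by (meson conn_def)
qed

lemma is_walk_mono: "G \<subseteq> G' \<Longrightarrow> is_walk G p u v \<Longrightarrow> is_walk G' p u v"
  unfolding is_walk_def by (meson subsetD)

lemma conn_mono: "G \<subseteq> G' \<Longrightarrow> conn G u v \<Longrightarrow> conn G' u v"
  unfolding conn_def using is_walk_mono by metis

lemma walk_edges_conn: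
  assumes "is_walk G p u v" "\<And>x y. {x,y} \<in> G \<Longrightarrow> conn G' x y"
  shows "conn G' u v"
  using assms(1)
proof (induction p arbitrary: u)
  case Nil then show ?case by simp
next
  case (Cons x p)
  show ?case
  proof (cases p)
    case Nil then show ?thesis using Cons.prems Nil by (auto simp add: conn_refl)
  next
    case (Cons y rest)
    then have "x = u" "{x,y} \<in> G" "is_walk G p y v" using Cons.prems by auto
    then have "conn G' y v" using Cons.IH by blast
    moreover have "conn G' u y" using assms(2) \<open>x = u\<close> \<open>{x,y} \<in> G\<close> by blast
    ultimately show ?thesis using conn_trans by metis
  qed
qed

lemma finite_pairs_on: "finite S \<Longrightarrow> finite (pairs_on S)"
proof -
  assume "finite S"
  have "pairs_on S \<subseteq> (\<lambda>(u,v). {u,v}) ` (S \<times> S)" unfolding pairs_on_def by auto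
  moreover have "finite ((\<lambda>(u,v). {u,v}) ` (S \<times> S))" using \<open>finite S\<close> by simp
  ultimately show ?thesis by (rule finite_subset)
qed

lemma card_conn_ge:
  assumes "r \<in> S" "finite E" "\<forall>v\<in>S. conn E v r"
  shows "card S - 1 \<le> card E"
proof -
  define hop where "hop v = (LEAST n. \<exists>p. is_walk E p v r \<and> length p = n)" for v
  have ex: "\<exists>y. {v,y} \<in> E \<and> hop y < hop v" if "v \<in> S" "v \<noteq> r" for v
  proof -
    from assms(3) that obtain p where "is_walk E p v r" by (auto simp: conn_def)
    then have "\<exists>n p. is_walk E p v r \<and> length p = n" by blast
    then have "\<exists>p. is_walk E p v r \<and> length p = hop v" unfolding hop_def by (rule LeastI_ex)
    then obtain p where p: "is_walk E p v r" "length p = hop v" by blast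
    show ?thesis
    proof (cases p)
      case Nil then show ?thesis using p by simp
    next
      case (Cons x p')
      note pc = this
      show ?thesis
      proof (cases p')
        case Nil then show ?thesis using p pc that by auto
      next
        case (Cons y rest)
        then have "{v,y} \<in> E" "is_walk E (y # rest) y r" using p pc by auto
        then have "hop y \<le> length (y # rest)" unfolding hop_def by (intro Least_le) blast
        then have "hop y < hop v" using p pc Cons by simp
        then show ?thesis using \<open>{v,y} \<in> E\<close> by blast
      qed
    qed
  qed
  then have "\<forall>v\<in>S - {r}. \<exists>y. {v,y} \<in> E \<and> hop y < hop v" by blast
  then obtain nxt where nxt: "\<forall>v\<in>S - {r}. {v, nxt v} \<in> E \<and> hop (nxt v) < hop v" by (rule bchoice[elim_format]) blast
  have inj: "inj_on (\<lambda>v. {v, nxt v}) (S - {r})"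
  proof (rule inj_onI)
    fix v w assume v: "v \<in> S - {r}" and w: "w \<in> S - {r}" and eq: "{v, nxt v} = {w, nxt w}"
    show "v = w"
    proof (rule ccontr)
      assume "v \<noteq> w"
      then have "v = nxt w" "w = nxt v" using eq by (auto simp: doubleton_eq_iff)
      moreover have "hop (nxt v) < hop v" "hop (nxt w) < hop w" using nxt v w by auto
      ultimately show False by simp
    qed
  qed
  have "card (S - {r}) \<le> card E"
    by (rule card_inj_on_le[OF inj _ assms(2)]) (use nxt in blast)
  then show ?thesis using assms(1) by (metis card_Diff_singleton_if)
qed



lemma assemble:
  fixes U :: "'j \<Rightarrow> 'a set" and E :: "'a set set"
  assumes S0: "r0 \<in> S" and ES: "E \<subseteq> pairs_on S" and finE: "finite E"
    and connE: "\<forall>u\<in>S. \<forall>v\<in>S. conn E u v" and finJ: "finite Js"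
    and disj: "\<forall>J\<in>Js. \<forall>J'\<in>Js. J \<noteq> J' \<longrightarrow> U J \<inter> U J' = {}"
    and cyc: "\<forall>J\<in>Js. \<exists>e\<in>E. e \<subseteq> U J \<and> (\<exists>a b. e = {a,b} \<and> conn ({e'\<in>E. e' \<subseteq> U J} - {e}) a b)"
  shows "card S - 1 + card Js \<le> card E"
proof -
  from cyc have "\<forall>J\<in>Js. \<exists>e. e \<in> E \<and> e \<subseteq> U J \<and> (\<exists>a b. e = {a,b} \<and> conn ({e'\<in>E. e' \<subseteq> U J} - {e}) a b)"
    by (simp add: Bex_def)
  then have "\<exists>ee. \<forall>J\<in>Js. ee J \<in> E \<and> ee J \<subseteq> U J \<and> (\<exists>a b. ee J = {a,b} \<and> conn ({e'\<in>E. e' \<subseteq> U J} - {ee J}) a b)"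
    by (rule bchoice)
  then obtain ee where ee: "\<forall>J\<in>Js. ee J \<in> E \<and> ee J \<subseteq> U J \<and> (\<exists>a b. ee J = {a,b} \<and> conn ({e'\<in>E. e' \<subseteq> U J} - {ee J}) a b)"
    by (elim exE)
  have eeE: "ee J \<in> E" if "J \<in> Js" for J using ee that by simp
  have eeU: "ee J \<subseteq> U J" if "J \<in> Js" for J using ee that by simp
  have eeab: "\<exists>a b. ee J = {a,b} \<and> conn ({e'\<in>E. e' \<subseteq> U J} - {ee J}) a b" if "J \<in> Js" for J
    using ee that by simp
  define F where "F = ee ` Js"
  have ne: "ee J \<noteq> {}" if "J \<in> Js" for J using eeab[OF that] by auto
  have other: "\<not> ee J' \<subseteq> U J" if "J \<in> Js" "J' \<in> Js" "J' \<noteq> J" for J J'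
  proof
    assume "ee J' \<subseteq> U J"
    moreover have "ee J' \<subseteq> U J'" using eeU that by simp
    ultimately have "ee J' \<subseteq> U J \<inter> U J'" by (rule Int_greatest)
    moreover have "U J \<inter> U J' = {}" using disj that by simp
    ultimately show False using ne[OF that(2)] by simp
  qed
  have inj: "inj_on ee Js"
  proof (rule inj_onI)
    fix J J' assume JJ: "J \<in> Js" "J' \<in> Js" "ee J = ee J'"
    show "J = J'"
    proof (rule ccontr)
      assume "J \<noteq> J'"
      moreover have "ee J' \<subseteq> U J" using eeU[OF JJ(1)] JJ(3) by simp
      ultimately show False using other[OF JJ(1) JJ(2)] by simp
    qed
  qed
  have cardF: "card F = card Js" unfolding F_def using inj by (rule card_image)
  have FE: "F \<subseteq> E" unfolding F_def using eeE by blast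
  have sub: "{e'\<in>E. e' \<subseteq> U J} - {ee J} \<subseteq> E - F" if "J \<in> Js" for J
  proof
    fix e' assume e': "e' \<in> {e'\<in>E. e' \<subseteq> U J} - {ee J}"
    have "e' \<notin> F"
    proof
      assume "e' \<in> F"
      then obtain J' where "J' \<in> Js" "e' = ee J'" unfolding F_def by blast
      then show False using e' other[OF that \<open>J' \<in> Js\<close>] by blast
    qed
    then show "e' \<in> E - F" using e' by blast
  qed
  have edge: "conn (E - F) x y" if "{x,y} \<in> E" for x y
  proof (cases "{x,y} \<in> F")
    case False then show ?thesis using that by (intro conn_edge) blast
  next
    case True
    then obtain J where J: "J \<in> Js" "{x,y} = ee J" unfolding F_def by blast
    then obtain a b where ab: "ee J = {a,b}" "conn ({e'\<in>E. e' \<subseteq> U J} - {ee J}) a b" using eeab[OF J(1)] by blast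
    then have cab: "conn (E - F) a b" using conn_mono[OF sub[OF J(1)]] by blast
    have "(x = a \<and> y = b) \<or> (x = b \<and> y = a)" using J(2) ab(1) by (auto simp: doubleton_eq_iff)
    then show ?thesis using cab conn_sym by metis
  qed
  have "\<forall>v\<in>S. conn (E - F) v r0"
  proof
    fix v assume "v \<in> S"
    then obtain p where "is_walk E p v r0" using connE S0 unfolding conn_def by blast
    then show "conn (E - F) v r0" by (rule walk_edges_conn) (rule edge)
  qed
  moreover have "finite (E - F)" using finE by simp
  ultimately have "card S - 1 \<le> card (E - F)" using card_conn_ge[OF S0] by blast
  moreover have "card (E - F) = card E - card F" using FE finE by (simp add: card_Diff_subset finite_subset)
  moreover have "card F \<le> card E" using FE finE by (rule card_mono[rotated])
  ultimately show ?thesis using cardF by linarith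
qed



definition cnt :: "'a set set \<Rightarrow> 'a list \<Rightarrow> nat" where
  "cnt X p = (\<Sum>k<length p - 1. if {p!k, p!Suc k} \<in> X then 1 else 0)"

lemma flip_nat: "even (\<Sum>k<N. if h k \<noteq> h (Suc k) then 1 else (0::nat)) \<longleftrightarrow> (h 0 \<longleftrightarrow> h N)"
  by (induction N) auto

lemma flip_list:
  assumes "p \<noteq> []"
  shows "even (\<Sum>k<length p - 1. if g (p!k) \<noteq> g (p!Suc k) then 1 else (0::nat)) \<longleftrightarrow> (g (hd p) \<longleftrightarrow> g (last p))"
  using flip_nat[of "\<lambda>k. g (p!k)" "length p - 1"] assms by (simp add: hd_conv_nth last_conv_nth)

lemma par_sum: "(\<forall>i<(N::nat). even (c i) \<longleftrightarrow> even (d i)) \<Longrightarrow> even (\<Sum>i<N. (c i::nat)) \<longleftrightarrow> even (\<Sum>i<N. (d i::nat))"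
proof (induction N)
  case 0 then show ?case by simp
next
  case (Suc N) then show ?case by auto
qed

lemma ring_cycle:
  fixes G :: "'a set set" and q :: "nat \<Rightarrow> 'a" and P :: "nat \<Rightarrow> 'a list"
  assumes finX: "finite X" and XG: "X \<subseteq> G" and Gab: "\<forall>e\<in>G. \<exists>a b. e = {a,b}"
    and qN: "q N = q 0"
    and walks: "\<forall>i<N. is_walk G (P i) (q i) (q (Suc i))"
    and i0: "i0 < N" and par: "\<forall>i<N. even (cnt X (P i)) \<longleftrightarrow> i \<noteq> i0"
  shows "\<exists>e\<in>G. \<exists>a b. e = {a,b} \<and> conn (G - {e}) a b"
proof (rule ccontr)
  assume H: "\<not> ?thesis"
  have odd_tot: "odd (\<Sum>i<N. cnt X (P i))"
  proof -
    have "even (\<Sum>i<N. cnt X (P i)) \<longleftrightarrow> even (\<Sum>i<N. (if i = i0 then 1 else 0::nat))"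
      by (rule par_sum) (use par in auto)
    moreover have "(\<Sum>i<N. (if i = i0 then 1 else 0::nat)) = 1" using i0 by simp
    ultimately show ?thesis by simp
  qed
  have split: "cnt X p = (\<Sum>e\<in>X. cnt {e} p)" for p
  proof -
    have "cnt X p = (\<Sum>k<length p - 1. \<Sum>e\<in>X. if {p!k, p!Suc k} = e then 1 else 0)"
      unfolding cnt_def using finX by (intro sum.cong) auto
    also have "\<dots> = (\<Sum>e\<in>X. \<Sum>k<length p - 1. if {p!k, p!Suc k} = e then 1 else 0)" by (rule sum.swap)
    also have "\<dots> = (\<Sum>e\<in>X. cnt {e} p)" unfolding cnt_def by simp
    finally show ?thesis .
  qed
  have "(\<Sum>i<N. cnt X (P i)) = (\<Sum>e\<in>X. \<Sum>i<N. cnt {e} (P i))"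
    unfolding split by (rule sum.swap)
  moreover have "even (\<Sum>i<N. cnt {e} (P i))" if "e \<in> X" for e
  proof -
    from that XG Gab obtain a b where ab: "e = {a,b}" "e \<in> G" by blast
    define f where "f v = conn (G - {e}) a v" for v
    have nb: "\<not> f b" using H ab unfolding f_def by blast
    have fa: "f a" unfolding f_def by (rule conn_refl)
    have step: "({x,y} \<in> {e}) \<longleftrightarrow> (f x \<noteq> f y)" if "{x,y} \<in> G" for x y
    proof (cases "{x,y} = e")
      case True
      then have "(x = a \<and> y = b) \<or> (x = b \<and> y = a)" using ab by (auto simp: doubleton_eq_iff)
      then show ?thesis using True fa nb by auto
    next
      case False
      then have xy: "{x,y} \<in> G - {e}" using that by simp
      then have yx: "{y,x} \<in> G - {e}" by (simp add: insert_commute)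
      have "f x \<longleftrightarrow> f y" unfolding f_def using conn_trans[OF _ conn_edge[OF xy]] conn_trans[OF _ conn_edge[OF yx]] by blast
      then show ?thesis using False by simp
    qed
    have each: "even (cnt {e} (P i)) \<longleftrightarrow> (f (q i) \<longleftrightarrow> f (q (Suc i)))" if "i < N" for i
    proof -
      have w: "is_walk G (P i) (q i) (q (Suc i))" using walks that by simp
      have eq: "cnt {e} (P i) = (\<Sum>k<length (P i) - 1. if f (P i ! k) \<noteq> f (P i ! Suc k) then 1 else 0)"
        unfolding cnt_def
      proof (rule sum.cong[OF refl])
        fix k assume "k \<in> {..<length (P i) - 1}"
        then have "{P i ! k, P i ! Suc k} \<in> G" using w unfolding is_walk_def by auto
        then show "(if {P i ! k, P i ! Suc k} \<in> {e} then 1 else 0) = (if f (P i ! k) \<noteq> f (P i ! Suc k) then 1 else (0::nat))"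
          using step by presburger
      qed
      have "even (\<Sum>k<length (P i) - 1. if f (P i ! k) \<noteq> f (P i ! Suc k) then 1 else (0::nat)) \<longleftrightarrow> (f (hd (P i)) \<longleftrightarrow> f (last (P i)))"
        using w by (intro flip_list) (simp add: is_walk_def)
      then show ?thesis using w eq by (simp add: is_walk_def)
    qed
    have "even (\<Sum>i<N. cnt {e} (P i)) \<longleftrightarrow> even (\<Sum>i<N. if f (q i) \<noteq> f (q (Suc i)) then 1 else (0::nat))"
      by (rule par_sum) (use each in auto)
    also have "\<dots> \<longleftrightarrow> (f (q 0) \<longleftrightarrow> f (q N))" by (rule flip_nat)
    finally show ?thesis using qN by simp
  qed
  ultimately have "even (\<Sum>i<N. cnt X (P i))" by (simp add: dvd_sum)
  then show False using odd_tot by simp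
qed



lemma dist_chain:
  fixes p :: "'a::metric_space list"
  assumes "j \<le> l" "l < length p"
  shows "dist (p!j) (p!l) \<le> (\<Sum>i\<in>{j..<l}. dist (p!i) (p!Suc i))"
  using assms
proof (induction l)
  case 0 then show ?case by simp
next
  case (Suc l)
  show ?case
  proof (cases "j = Suc l")
    case True then show ?thesis by simp
  next
    case False
    then have "j \<le> l" using Suc.prems by simp
    then have "dist (p!j) (p!l) \<le> (\<Sum>i\<in>{j..<l}. dist (p!i) (p!Suc i))" using Suc by simp
    moreover have "dist (p!j) (p!Suc l) \<le> dist (p!j) (p!l) + dist (p!l) (p!Suc l)" by (rule dist_triangle)
    moreover have "(\<Sum>i\<in>{j..<Suc l}. dist (p!i) (p!Suc i)) = (\<Sum>i\<in>{j..<l}. dist (p!i) (p!Suc i)) + dist (p!l) (p!Suc l)"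
      using \<open>j \<le> l\<close> by simp
    ultimately show ?thesis by linarith
  qed
qed

lemma walk_vertex_bound:
  fixes p :: "'a::metric_space list"
  assumes "is_walk G p u v" "x \<in> set p"
  shows "dist u x + dist x v \<le> walk_length p"
proof -
  obtain k where k: "k < length p" "x = p!k" using assms(2) by (metis in_set_conv_nth)
  have ne: "p \<noteq> []" using assms(1) by (simp add: is_walk_def)
  have u: "u = p!0" using assms(1) ne by (simp add: is_walk_def hd_conv_nth)
  have v: "v = p!(length p - 1)" using assms(1) ne by (simp add: is_walk_def last_conv_nth)
  have "dist u x \<le> (\<Sum>i\<in>{0..<k}. dist (p!i) (p!Suc i))" using dist_chain[of 0 k p] k u by simp
  moreover have "dist x v \<le> (\<Sum>i\<in>{k..<length p - 1}. dist (p!i) (p!Suc i))" using dist_chain[of k "length p - 1" p] k v by simp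
  moreover have "walk_length p = (\<Sum>i\<in>{0..<k}. dist (p!i) (p!Suc i)) + (\<Sum>i\<in>{k..<length p - 1}. dist (p!i) (p!Suc i))"
    unfolding walk_length_def using k by (simp add: sum.atLeastLessThan_concat lessThan_atLeast0)
  ultimately show ?thesis by linarith
qed

lemma dist_unit:
  fixes x y :: "real^'n"
  assumes "\<forall>k. k \<noteq> k0 \<longrightarrow> x$k = y$k" "\<bar>x$k0 - y$k0\<bar> = 1"
  shows "dist x y = 1"
proof -
  have "(\<Sum>i\<in>UNIV. (dist (x$i) (y$i))\<^sup>2) = (\<Sum>i\<in>UNIV. if i = k0 then 1 else 0)"
  proof (rule sum.cong[OF refl])
    fix i show "(dist (x$i) (y$i))\<^sup>2 = (if i = k0 then 1 else 0)"
      using assms by (cases "i = k0") (auto simp: dist_real_def)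
  qed
  then show ?thesis unfolding dist_vec_def L2_set_def by simp
qed

lemma coord_le_dist:
  fixes x y :: "real^'n"
  shows "\<bar>x$k - y$k\<bar> \<le> dist x y"
  using dist_vec_nth_le[of x k y] by (simp add: dist_real_def)



definition Xn :: "nat \<Rightarrow> nat \<Rightarrow> nat" where
  "Xn s i = (if i \<le> s then i else (if i \<le> 2 * s then s else (if i \<le> 3 * s then 3 * s - i else 0)))"
definition Yn :: "nat \<Rightarrow> nat \<Rightarrow> nat" where
  "Yn s i = (if i \<le> s then 0 else (if i \<le> 2 * s then i - s else (if i \<le> 3 * s then s else 4 * s - i)))"

definition ring :: "nat \<Rightarrow> 'n::finite \<Rightarrow> 'n \<Rightarrow> ('n \<Rightarrow> nat) \<Rightarrow> nat \<Rightarrow> real^'n" where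
  "ring s i1 i2 J i = (\<chi> k. real (2* s*J k + (if k = i1 then Xn s i else if k = i2 then Yn s i else 0)))"

lemma XY1: "i \<le> s \<Longrightarrow> Xn s i = i \<and> Yn s i = 0" by (simp add: Xn_def Yn_def)
lemma XY2: "1 \<le> s \<Longrightarrow> s \<le> i \<Longrightarrow> i \<le> 2* s \<Longrightarrow> Xn s i = s \<and> Yn s i = i - s" by (simp add: Xn_def Yn_def)
lemma XY3: "1 \<le> s \<Longrightarrow> 2* s \<le> i \<Longrightarrow> i \<le> 3* s \<Longrightarrow> Xn s i = 3* s - i \<and> Yn s i = s" by (simp add: Xn_def Yn_def)
lemma XY4: "1 \<le> s \<Longrightarrow> 3* s \<le> i \<Longrightarrow> Xn s i = 0 \<and> Yn s i = 4* s - i" by (simp add: Xn_def Yn_def)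
lemma Xn_le: "Xn s i \<le> s"
proof -
  have "i \<le> 3 * s \<Longrightarrow> \<not> i \<le> 2 * s \<Longrightarrow> 3 * s - i \<le> s" by linarith
  then show ?thesis unfolding Xn_def by auto
qed
lemma Yn_le: "Yn s i \<le> s"
proof -
  have "i \<le> 2 * s \<Longrightarrow> i - s \<le> s" by linarith
  moreover have "\<not> i \<le> 3 * s \<Longrightarrow> 4 * s - i \<le> s" by linarith
  ultimately show ?thesis unfolding Yn_def by auto
qed

lemma ring_i1: "ring s i1 i2 J i $ i1 = real (2* s*J i1 + Xn s i)"
  by (simp add: ring_def)
lemma ring_i2: "i1 \<noteq> i2 \<Longrightarrow> ring s i1 i2 J i $ i2 = real (2* s*J i2 + Yn s i)"
  by (simp add: ring_def)
lemma ring_other: "k \<noteq> i1 \<Longrightarrow> k \<noteq> i2 \<Longrightarrow> ring s i1 i2 J i $ k = real (2* s*J k)"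
  by (simp add: ring_def)

lemma ring_range: "real (2* s*J k) \<le> ring s i1 i2 J i $ k \<and> ring s i1 i2 J i $ k \<le> real (2* s*J k) + real s"
  using Xn_le[of s i] Yn_le[of s i] by (simp add: ring_def)

lemma ring_closed: "1 \<le> s \<Longrightarrow> ring s i1 i2 J (4 * s) = ring s i1 i2 J 0"
proof -
  assume "1 \<le> s"
  then have "Xn s (4 * s) = 0" "Yn s (4 * s) = 0" "Xn s 0 = 0" "Yn s 0 = 0" by (simp_all add: Xn_def Yn_def)
  then show ?thesis unfolding ring_def vec_eq_iff by auto
qed

lemma ring_grid:
  assumes "\<forall>k. J k < m" "2* s*m \<le> r" "1 \<le> s"
  shows "ring s i1 i2 J i \<in> int_grid r"
  unfolding int_grid_def
proof (intro CollectI allI)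
  fix k
  have "J k + 1 \<le> m" using assms(1) by (simp add: Suc_le_eq)
  then have "2 * s * (J k + 1) \<le> 2 * s * m" by (rule mult_le_mono2)
  then have "2* s*J k + 2* s \<le> r" using assms(2) by (simp add: algebra_simps)
  moreover have "(if k = i1 then Xn s i else if k = i2 then Yn s i else 0) \<le> s"
    using Xn_le Yn_le by simp
  ultimately have "2* s*J k + (if k = i1 then Xn s i else if k = i2 then Yn s i else 0) < r" using assms(3) by linarith
  then show "\<exists>j. j < r \<and> ring s i1 i2 J i $ k = real j" by (auto simp: ring_def)
qed

lemma ring_step:
  assumes "i1 \<noteq> i2" "1 \<le> s" "i < 4* s"
  shows "dist (ring s i1 i2 J i) (ring s i1 i2 J (Suc i)) = 1"
proof -
  consider "i < s" | "s \<le> i \<and> i < 2* s" | "2* s \<le> i \<and> i < 3* s" | "3* s \<le> i" by linarith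
  then show ?thesis
  proof cases
    case 1
    then have "Xn s i = i" "Yn s i = 0" "Xn s (Suc i) = Suc i" "Yn s (Suc i) = 0" using XY1[of i s] XY1[of "Suc i" s] by auto
    then show ?thesis using assms(1) by (intro dist_unit[where ?k0.0=i1]) (auto simp: ring_def)
  next
    case 2
    then have "Xn s i = s" "Yn s i = i - s" "Xn s (Suc i) = s" "Yn s (Suc i) = Suc i - s" using XY2[of s i] XY2[of s "Suc i"] assms(2) by auto
    then show ?thesis using assms(1) 2 by (intro dist_unit[where ?k0.0=i2]) (auto simp: ring_def)
  next
    case 3
    then have "Xn s i = 3* s - i" "Yn s i = s" "Xn s (Suc i) = 3* s - Suc i" "Yn s (Suc i) = s" using XY3[of s i] XY3[of s "Suc i"] assms(2) by auto
    then show ?thesis using assms(1) 3 by (intro dist_unit[where ?k0.0=i1]) (auto simp: ring_def)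
  next
    case 4
    then have "Xn s i = 0" "Yn s i = 4* s - i" "Xn s (Suc i) = 0" "Yn s (Suc i) = 4* s - Suc i" using XY4[of s i] XY4[of s "Suc i"] assms(2) by auto
    then show ?thesis using assms 4 by (intro dist_unit[where ?k0.0=i2]) (auto simp: ring_def)
  qed
qed



definition Ureg :: "nat \<Rightarrow> 'n::finite \<Rightarrow> 'n \<Rightarrow> real \<Rightarrow> ('n \<Rightarrow> nat) \<Rightarrow> (real^'n) set" where
  "Ureg s i1 i2 T J = {v. \<exists>i<4 * s. dist v (ring s i1 i2 J i) + dist v (ring s i1 i2 J (Suc i)) < T}"

lemma Ureg_disj:
  assumes Ts: "T \<le> real s" and Jk: "J k \<noteq> J' k"
  shows "Ureg s i1 i2 T J \<inter> Ureg s i1 i2 T J' = {}"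
proof (rule ccontr)
  assume "Ureg s i1 i2 T J \<inter> Ureg s i1 i2 T J' \<noteq> {}"
  then obtain v i i' where
    h1: "dist v (ring s i1 i2 J i) + dist v (ring s i1 i2 J (Suc i)) < T" and
    h2: "dist v (ring s i1 i2 J' i') + dist v (ring s i1 i2 J' (Suc i')) < T"
    unfolding Ureg_def by blast
  define a where "a = ring s i1 i2 J i $ k"
  define a' where "a' = ring s i1 i2 J (Suc i) $ k"
  define b where "b = ring s i1 i2 J' i' $ k"
  define b' where "b' = ring s i1 i2 J' (Suc i') $ k"
  have "\<bar>v$k - a\<bar> + \<bar>v$k - a'\<bar> < T"
    using h1 coord_le_dist[of v k "ring s i1 i2 J i"] coord_le_dist[of v k "ring s i1 i2 J (Suc i)"]
    unfolding a_def a'_def by linarith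
  moreover have "\<bar>v$k - b\<bar> + \<bar>v$k - b'\<bar> < T"
    using h2 coord_le_dist[of v k "ring s i1 i2 J' i'"] coord_le_dist[of v k "ring s i1 i2 J' (Suc i')"]
    unfolding b_def b'_def by linarith
  moreover have ra: "real (2 * s * J k) \<le> a \<and> a \<le> real (2 * s * J k) + real s"
    "real (2 * s * J k) \<le> a' \<and> a' \<le> real (2 * s * J k) + real s"
    unfolding a_def a'_def by (rule ring_range)+
  moreover have rb: "real (2 * s * J' k) \<le> b \<and> b \<le> real (2 * s * J' k) + real s"
    "real (2 * s * J' k) \<le> b' \<and> b' \<le> real (2 * s * J' k) + real s"
    unfolding b_def b'_def by (rule ring_range)+
  moreover have "real (2 * s * J k) + 2 * real s \<le> real (2 * s * J' k) \<or> real (2 * s * J' k) + 2 * real s \<le> real (2 * s * J k)"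
  proof (cases "J k < J' k")
    case True
    then have "2 * s * (J k + 1) \<le> 2 * s * J' k" by (intro mult_le_mono2) simp
    then have "2 * s * J k + 2 * s \<le> 2 * s * J' k" by (simp add: algebra_simps)
    then have "real (2 * s * J k + 2 * s) \<le> real (2 * s * J' k)" by (rule of_nat_mono)
    then show ?thesis by simp
  next
    case False
    then have "J' k < J k" using Jk by simp
    then have "2 * s * (J' k + 1) \<le> 2 * s * J k" by (intro mult_le_mono2) simp
    then have "2 * s * J' k + 2 * s \<le> 2 * s * J k" by (simp add: algebra_simps)
    then have "real (2 * s * J' k + 2 * s) \<le> real (2 * s * J k)" by (rule of_nat_mono)
    then show ?thesis by simp
  qed
  ultimately show False using Ts by linarith
qed

lemma cnt_zero: "(\<And>k. Suc k < length p \<Longrightarrow> {p!k, p!Suc k} \<notin> X) \<Longrightarrow> cnt X p = 0"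
  unfolding cnt_def by (intro sum.neutral) auto

lemma half_bound:
  fixes x c T :: real
  assumes "\<bar>x - c\<bar> + \<bar>x - c\<bar> < T"
  shows "x < c + T/2" "x > c - T/2"
  using assms by (auto simp: abs_less_iff abs_if split: if_splits)



lemma sign_flip:
  assumes "s \<le> i"
  shows "((2 * (i - s) > s) \<longleftrightarrow> (2 * (Suc i - s) > (s::nat))) \<longleftrightarrow> i \<noteq> s + s div 2"
proof -
  define t where "t = i - s"
  define d where "d = s div 2"
  have sd: "s = 2 * d + s mod 2" unfolding d_def by simp
  have r: "s mod 2 < 2" by simp
  have st: "Suc i - s = t + 1" unfolding t_def using assms by simp
  have it: "i = s + t" unfolding t_def using assms by simp
  have A0: "(2 * x > s) \<longleftrightarrow> x > d" for x using sd r by linarith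
  have A: "(2 * t > s) \<longleftrightarrow> t > d" by (rule A0)
  have B: "(2 * (t + 1) > s) \<longleftrightarrow> t + 1 > d" by (rule A0)
  have C: "((2 * t > s) \<longleftrightarrow> (2 * (t + 1) > s)) \<longleftrightarrow> t \<noteq> d" unfolding A B by auto
  have D: "(i \<noteq> s + s div 2) \<longleftrightarrow> t \<noteq> d" unfolding d_def[symmetric] using it by simp
  show ?thesis unfolding st t_def[symmetric] D by (rule C)
qed

lemma half_cmp:
  fixes y0 :: real
  shows "(y0 + real s / 2 < y0 + real n) \<longleftrightarrow> (s < 2 * n)"
proof -
  have "(y0 + real s / 2 < y0 + real n) \<longleftrightarrow> (real s < real (2 * n))" by (simp add: mult.commute)
  also have "\<dots> \<longleftrightarrow> s < 2 * n" by (rule of_nat_less_iff)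
  finally show ?thesis .
qed

lemma ring_cyc:
  fixes E :: "(real^'n::finite) set set" and J :: "'n \<Rightarrow> nat"
  assumes i12: "i1 \<noteq> i2" and s1: "1 \<le> s" and Ts: "T \<le> real s" and finE: "finite E"
    and Eab: "\<forall>e\<in>E. \<exists>a b. e = {a,b}"
    and walks: "\<forall>i<4 * s. \<exists>p. is_walk E p (ring s i1 i2 J i) (ring s i1 i2 J (Suc i)) \<and> walk_length p < T"
  shows "\<exists>e\<in>{e\<in>E. e \<subseteq> Ureg s i1 i2 T J}. \<exists>a b. e = {a,b} \<and> conn ({e\<in>E. e \<subseteq> Ureg s i1 i2 T J} - {e}) a b"
proof -
  define U where "U = Ureg s i1 i2 T J"
  define G where "G = {e\<in>E. e \<subseteq> U}"
  define q where "q = ring s i1 i2 J"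
  define x0 :: real where "x0 = real (2 * s * J i1)"
  define y0 :: real where "y0 = real (2 * s * J i2)"
  define cx :: real where "cx = x0 + real s / 2"
  define cy :: real where "cy = y0 + real s / 2"
  define X where "X = {e\<in>G. (\<forall>v\<in>e. v$i1 > cx) \<and> (\<exists>a\<in>e. \<exists>b\<in>e. (a$i2 > cy) \<noteq> (b$i2 > cy))}"
  have qx: "q i $ i1 = x0 + real (Xn s i)" for i unfolding q_def x0_def by (simp add: ring_i1)
  have qy: "q i $ i2 = y0 + real (Yn s i)" for i unfolding q_def y0_def using i12 by (simp add: ring_i2)
  have "\<forall>i. \<exists>p. i < 4 * s \<longrightarrow> is_walk E p (q i) (q (Suc i)) \<and> walk_length p < T"
    using walks unfolding q_def by blast
  then obtain P where P: "\<And>i. i < 4 * s \<Longrightarrow> is_walk E (P i) (q i) (q (Suc i)) \<and> walk_length (P i) < T"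
    by (metis choice)
  have vb: "\<bar>v$k - q i $k\<bar> + \<bar>v$k - q (Suc i) $k\<bar> < T" and inU: "v \<in> U"
    if "i < 4 * s" "v \<in> set (P i)" for i v k
  proof -
    have "dist (q i) v + dist v (q (Suc i)) \<le> walk_length (P i)"
      using walk_vertex_bound P[OF that(1)] that(2) by blast
    then have d: "dist v (q i) + dist v (q (Suc i)) < T" using P[OF that(1)] by (simp add: dist_commute)
    then show "\<bar>v$k - q i $k\<bar> + \<bar>v$k - q (Suc i) $k\<bar> < T"
      using coord_le_dist[of v k "q i"] coord_le_dist[of v k "q (Suc i)"] by linarith
    show "v \<in> U" unfolding U_def Ureg_def using d that(1) unfolding q_def by blast
  qed
  have wG: "is_walk G (P i) (q i) (q (Suc i))" if "i < 4 * s" for i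
  proof -
    have w: "is_walk E (P i) (q i) (q (Suc i))" using P that by blast
    show ?thesis unfolding is_walk_def
    proof (intro conjI allI impI)
      show "P i \<noteq> []" "hd (P i) = q i" "last (P i) = q (Suc i)" using w by (simp_all add: is_walk_def)
      fix k assume k: "Suc k < length (P i)"
      then have "{P i ! k, P i ! Suc k} \<in> E" using w by (simp add: is_walk_def)
      moreover have "P i ! k \<in> set (P i)" "P i ! Suc k \<in> set (P i)" using k by simp_all
      ultimately show "{P i ! k, P i ! Suc k} \<in> G" unfolding G_def using inU[OF that] by blast
    qed
  qed
  have edgeG: "{P i ! k, P i ! Suc k} \<in> G" if "i < 4 * s" "Suc k < length (P i)" for i k
    using wG[OF that(1)] that(2) by (simp add: is_walk_def)
  have par: "even (cnt X (P i)) \<longleftrightarrow> i \<noteq> s + s div 2" if i: "i < 4 * s" for i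
  proof -
    consider "i < s" | "s \<le> i \<and> i < 2 * s" | "2 * s \<le> i \<and> i < 3 * s" | "3 * s \<le> i" by linarith
    then show ?thesis
    proof cases
      case 1
      then have "Yn s i = 0" "Yn s (Suc i) = 0" using XY1[of i s] XY1[of "Suc i" s] by auto
      then have "\<not> v$i2 > cy" if "v \<in> set (P i)" for v
        using half_bound(1)[of "v$i2" y0 T] vb[OF i that, of i2] qy Ts unfolding cy_def by simp
      then have "cnt X (P i) = 0"
        by (intro cnt_zero) (auto simp: X_def)
      then show ?thesis using 1 by simp
    next
      case 2
      then have "Xn s i = s" "Xn s (Suc i) = s" "Yn s i = i - s" "Yn s (Suc i) = Suc i - s"
        using XY2[of s i] XY2[of s "Suc i"] s1 by auto
      then have xv: "v$i1 > cx" if "v \<in> set (P i)" for v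
        using half_bound(2)[of "v$i1" "x0 + real s" T] vb[OF i that, of i1] qx Ts unfolding cx_def by simp
      have "cnt X (P i) = (\<Sum>k<length (P i) - 1. if (P i ! k $ i2 > cy) \<noteq> (P i ! Suc k $ i2 > cy) then 1 else 0)"
        unfolding cnt_def
      proof (rule sum.cong[OF refl])
        fix k assume "k \<in> {..<length (P i) - 1}"
        then have k: "Suc k < length (P i)" by simp
        then have "P i ! k \<in> set (P i)" "P i ! Suc k \<in> set (P i)" by simp_all
        then have "{P i ! k, P i ! Suc k} \<in> X \<longleftrightarrow> (P i ! k $ i2 > cy) \<noteq> (P i ! Suc k $ i2 > cy)"
          unfolding X_def using edgeG[OF i k] xv by auto
        then show "(if {P i ! k, P i ! Suc k} \<in> X then 1 else 0) = (if (P i ! k $ i2 > cy) \<noteq> (P i ! Suc k $ i2 > cy) then 1 else (0::nat))"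
          by simp
      qed
      moreover have "even (\<Sum>k<length (P i) - 1. if (P i ! k $ i2 > cy) \<noteq> (P i ! Suc k $ i2 > cy) then 1 else (0::nat))
          \<longleftrightarrow> ((hd (P i) $ i2 > cy) \<longleftrightarrow> (last (P i) $ i2 > cy))"
        using wG[OF i] by (intro flip_list) (simp add: is_walk_def)
      moreover have "hd (P i) = q i" "last (P i) = q (Suc i)" using wG[OF i] by (simp_all add: is_walk_def)
      moreover have "(q i $ i2 > cy) \<longleftrightarrow> 2 * (i - s) > s"
        using qy[of i] \<open>Yn s i = i - s\<close> half_cmp[of y0 s "i - s"] unfolding cy_def by simp
      moreover have "(q (Suc i) $ i2 > cy) \<longleftrightarrow> 2 * (Suc i - s) > s"
        using qy[of "Suc i"] \<open>Yn s (Suc i) = Suc i - s\<close> half_cmp[of y0 s "Suc i - s"] unfolding cy_def by simp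
      ultimately show ?thesis using sign_flip[of s i] 2 by simp
    next
      case 3
      then have "Yn s i = s" "Yn s (Suc i) = s" using XY3[of s i] XY3[of s "Suc i"] s1 by auto
      then have yv: "v$i2 > cy" if "v \<in> set (P i)" for v
        using half_bound(2)[of "v$i2" "y0 + real s" T] vb[OF i that, of i2] qy Ts unfolding cy_def by simp
      have "cnt X (P i) = 0"
      proof (rule cnt_zero)
        fix k assume "Suc k < length (P i)"
        then have "P i ! k \<in> set (P i)" "P i ! Suc k \<in> set (P i)" by simp_all
        then show "{P i ! k, P i ! Suc k} \<notin> X" unfolding X_def using yv by auto
      qed
      moreover have "s div 2 < s" using s1 by simp
      then have "i \<noteq> s + s div 2" using 3 by linarith
      ultimately show ?thesis by simp
    next
      case 4
      then have "Xn s i = 0" "Xn s (Suc i) = 0" using XY4[of s i] XY4[of s "Suc i"] s1 by auto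
      then have "\<not> v$i1 > cx" if "v \<in> set (P i)" for v
        using half_bound(1)[of "v$i1" x0 T] vb[OF i that, of i1] qx Ts unfolding cx_def by simp
      then have "cnt X (P i) = 0"
        by (intro cnt_zero) (auto simp: X_def)
      then show ?thesis using 4 s1 by simp
    qed
  qed
  have "\<exists>e\<in>G. \<exists>a b. e = {a,b} \<and> conn (G - {e}) a b"
  proof (rule ring_cycle[where X=X and q=q and N="4 * s" and P=P and ?i0.0="s + s div 2"])
    show "finite X" using finE unfolding X_def G_def by simp
    show "X \<subseteq> G" unfolding X_def by blast
    show "\<forall>e\<in>G. \<exists>a b. e = {a,b}" using Eab unfolding G_def by blast
    show "q (4 * s) = q 0" unfolding q_def using s1 by (rule ring_closed)
    show "\<forall>i<4 * s. is_walk G (P i) (q i) (q (Suc i))" using wG by blast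
    show "s + s div 2 < 4 * s" using s1 by simp
    show "\<forall>i<4 * s. even (cnt X (P i)) = (i \<noteq> s + s div 2)" using par by blast
  qed
  then show ?thesis unfolding G_def U_def .
qed



lemma PiE_UNIV_mem: "(J \<in> (PiE UNIV (\<lambda>_. {..<m}) :: ('n::finite \<Rightarrow> nat) set)) \<longleftrightarrow> (\<forall>k. J k < m)"
  by (simp add: PiE_UNIV_domain Pi_iff)

lemma card_PiE_UNIV: "card (PiE UNIV (\<lambda>_. {..<m}) :: ('n::finite \<Rightarrow> nat) set) = m ^ CARD('n)"
  by (simp add: card_PiE)

lemma grid_card:
  "finite (int_grid r :: (real^'n::finite) set) \<and> card (int_grid r :: (real^'n) set) = r ^ CARD('n)"
proof -
  define g :: "('n \<Rightarrow> nat) \<Rightarrow> real^'n" where "g f = (\<chi> i. real (f i))" for f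
  define A where "A = (PiE UNIV (\<lambda>_. {..<r}) :: ('n \<Rightarrow> nat) set)"
  have eq: "int_grid r = g ` A"
  proof
    show "g ` A \<subseteq> int_grid r" unfolding A_def g_def int_grid_def using PiE_UNIV_mem by fastforce
    show "int_grid r \<subseteq> g ` A"
    proof
      fix x :: "real^'n" assume "x \<in> int_grid r"
      then have "\<forall>i. \<exists>j. j < r \<and> x $ i = real j" unfolding int_grid_def by blast
      then obtain f where f: "\<forall>i. f i < r \<and> x $ i = real (f i)" by metis
      then have "f \<in> A" unfolding A_def using PiE_UNIV_mem by blast
      moreover have "x = g f" unfolding g_def using f by (simp add: vec_eq_iff)
      ultimately show "x \<in> g ` A" by blast
    qed
  qed
  have inj: "inj_on g A" unfolding g_def by (rule inj_onI) (simp add: vec_eq_iff fun_eq_iff)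
  have "finite A" unfolding A_def by (simp add: finite_PiE)
  then show ?thesis using eq inj card_image card_PiE_UNIV[of r] unfolding A_def by (metis finite_imageI)
qed

lemma exists_superset_card:
  assumes "finite B" "A \<subseteq> B" "card A \<le> n" "n \<le> card B"
  shows "\<exists>S. A \<subseteq> S \<and> S \<subseteq> B \<and> card S = n"
proof -
  have fA: "finite A" using assms(1,2) finite_subset by blast
  have "n - card A \<le> card (B - A)" using assms by (simp add: card_Diff_subset fA)
  then obtain C where C: "C \<subseteq> B - A" "card C = n - card A" by (meson obtain_subset_with_card_n)
  have fC: "finite C" using C(1) assms(1) finite_subset by blast
  have "card (A \<union> C) = card A + card C" using C(1) fA fC by (subst card_Un_disjoint) auto
  then have "card (A \<union> C) = n" using C(2) assms(3) by simp
  then show ?thesis using C(1) assms(2) by (intro exI[of _ "A \<union> C"]) auto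
qed



theorem theorem7:
  fixes r m n :: nat
  assumes "CARD('d::finite) \<ge> 2"
    and "r \<ge> 4" and "1 \<le> m" and "4 * m \<le> r"
    and "2 * r * m ^ (CARD('d) - 1) \<le> n" and "n \<le> r ^ CARD('d)"
  shows "\<exists>S :: (real^'d) set. S \<subseteq> int_grid r \<and> card S = n \<and>
           min_dilation S (m ^ CARD('d) - 1) \<ge> ereal (real r / (2 * real m) - 1)"
proof -
  note cardD = assms(1) and m1 = assms(3) and rm = assms(4) and nlo = assms(5) and nhi = assms(6)
  obtain i1 :: 'd where True by blast
  have "card (UNIV - {i1} :: 'd set) \<ge> 1" using cardD by (simp add: card_Diff_singleton)
  then have "UNIV - {i1} \<noteq> {}" by (metis card.empty not_one_le_zero)
  then obtain i2 :: 'd where "i2 \<in> UNIV - {i1}" by blast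
  then have i12: "i1 \<noteq> i2" by blast
  define s where "s = r div (2 * m)"
  have s2m: "s * (2 * m) \<le> r" unfolding s_def by (rule div_times_less_eq_dividend)
  have rlt: "r < (s + 1) * (2 * m)"
  proof -
    have "r = s * (2 * m) + r mod (2 * m)" unfolding s_def by (rule div_mult_mod_eq[symmetric])
    moreover have "r mod (2 * m) < 2 * m" using m1 by simp
    ultimately show ?thesis by (simp add: algebra_simps)
  qed
  have s1: "1 \<le> s"
  proof -
    have "2 * m \<le> r" using rm by simp
    then have "1 \<le> r div (2 * m)" using m1 by (simp add: div_le_mono le_div_geq)
    then show ?thesis unfolding s_def .
  qed
  have sm: "2 * s * m \<le> r" using s2m by (simp add: algebra_simps)
  define T :: real where "T = real r / (2 * real m) - 1"
  have Ts: "T \<le> real s"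
  proof -
    have "real r < real ((s + 1) * (2 * m))" using rlt by (simp only: of_nat_less_iff)
    then have "real r < (real s + 1) * (2 * real m)" by (simp add: algebra_simps)
    then have "real r / (2 * real m) < real s + 1" using m1 by (simp add: divide_less_eq)
    then show ?thesis unfolding T_def by linarith
  qed
  define Js where "Js = (PiE UNIV (\<lambda>_. {..<m}) :: ('d \<Rightarrow> nat) set)"
  have Jsmem: "J \<in> Js \<longleftrightarrow> (\<forall>k. J k < m)" for J unfolding Js_def by (rule PiE_UNIV_mem)
  have finJs: "finite Js" unfolding Js_def by (simp add: finite_PiE)
  have cardJs: "card Js = m ^ CARD('d)" unfolding Js_def by (rule card_PiE_UNIV)
  define R where "R = (\<Union>J\<in>Js. ring s i1 i2 J ` {..<4 * s})"
  have RG: "R \<subseteq> int_grid r" unfolding R_def using ring_grid[OF _ sm s1] Jsmem by blast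
  have "card R \<le> (\<Sum>J\<in>Js. card (ring s i1 i2 J ` {..<4 * s}))" unfolding R_def by (rule card_UN_le[OF finJs])
  also have "\<dots> \<le> (\<Sum>J\<in>Js. 4 * s)"
  proof (rule sum_mono)
    fix J show "card (ring s i1 i2 J ` {..<4 * s}) \<le> 4 * s"
      using card_image_le[of "{..<4 * s}" "ring s i1 i2 J"] by simp
  qed
  also have "\<dots> = m ^ CARD('d) * (4 * s)" using cardJs by simp
  also have "\<dots> = m ^ (CARD('d) - 1) * (2 * (2 * s * m))"
  proof -
    obtain D' where D': "CARD('d) = Suc D'" using cardD by (metis Suc_pred' less_le_trans zero_less_numeral)
    then have "m ^ CARD('d) = m * m ^ (CARD('d) - 1)" by simp
    then show ?thesis by (simp add: algebra_simps)
  qed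
  also have "\<dots> \<le> m ^ (CARD('d) - 1) * (2 * r)" using sm by (intro mult_le_mono2) simp
  also have "\<dots> \<le> n" using nlo by (simp add: algebra_simps)
  finally have cardR: "card R \<le> n" .
  have g: "finite (int_grid r :: (real^'d) set) \<and> card (int_grid r :: (real^'d) set) = r ^ CARD('d)" by (rule grid_card)
  have "\<exists>S. R \<subseteq> S \<and> S \<subseteq> int_grid r \<and> card S = n"
    using exists_superset_card[OF g[THEN conjunct1] RG cardR] g nhi by simp
  then obtain S where S: "R \<subseteq> S" "S \<subseteq> int_grid r" "card S = n" by blast
  have finS: "finite S" using S(2) grid_card[where 'n='d] finite_subset by blast
  have ringS: "ring s i1 i2 J i \<in> S" if "J \<in> Js" "i \<le> 4 * s" for J i
  proof (cases "i = 4 * s")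
    case True
    then have "ring s i1 i2 J i = ring s i1 i2 J 0" using ring_closed[OF s1] by simp
    moreover have "0 < 4 * s" using s1 by simp
    ultimately show ?thesis using that S(1) unfolding R_def by blast
  next
    case False
    then show ?thesis using that S(1) unfolding R_def by force
  qed
  have npos: "0 < n"
  proof -
    have "0 < m ^ (CARD('d) - 1)" using m1 by simp
    then have "0 < 2 * r * m ^ (CARD('d) - 1)" using assms(2) by simp
    then show ?thesis using nlo by linarith
  qed
  have main: "ereal T \<le> dilation S E" if E: "E \<subseteq> pairs_on S" "card E = card S - 1 + (m ^ CARD('d) - 1)" for E
  proof (rule ccontr)
    assume "\<not> ereal T \<le> dilation S E"
    then have dl: "dilation S E < ereal T" by simp
    have finE: "finite E" using E(1) finite_pairs_on[OF finS] finite_subset by blast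
    have Eab: "\<forall>e\<in>E. \<exists>a b. e = {a,b}" using E(1) unfolding pairs_on_def by blast
    have ratio: "graph_dist E u v / ereal (dist u v) < ereal T" if "u \<in> S" "v \<in> S" "u \<noteq> v" for u v
    proof -
      have "graph_dist E u v / ereal (dist u v) \<le> dilation S E"
        unfolding dilation_def using that by (intro Sup_upper) blast
      then show ?thesis using dl by simp
    qed
    have connE: "\<forall>u\<in>S. \<forall>v\<in>S. conn E u v"
    proof (intro ballI)
      fix u v assume uv: "u \<in> S" "v \<in> S"
      show "conn E u v"
      proof (cases "u = v")
        case True then show ?thesis by (simp add: conn_refl)
      next
        case False
        show ?thesis
        proof (rule ccontr)
          assume nc: "\<not> conn E u v"
          then have "{ereal (walk_length p) | p. is_walk E p u v} = {}" unfolding conn_def by blast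
          then have "graph_dist E u v = \<infinity>" unfolding graph_dist_def by (simp add: top_ereal_def)
          moreover have "0 < dist u v" using False by simp
          ultimately have "graph_dist E u v / ereal (dist u v) = \<infinity>" by simp
          then show False using ratio[OF uv False] by simp
        qed
      qed
    qed
    have cyc: "\<forall>J\<in>Js. \<exists>e\<in>E. e \<subseteq> Ureg s i1 i2 T J \<and> (\<exists>a b. e = {a,b} \<and> conn ({e'\<in>E. e' \<subseteq> Ureg s i1 i2 T J} - {e}) a b)"
    proof
      fix J assume J: "J \<in> Js"
      have walks: "\<forall>i<4 * s. \<exists>p. is_walk E p (ring s i1 i2 J i) (ring s i1 i2 J (Suc i)) \<and> walk_length p < T"
      proof (intro allI impI)
        fix i assume i: "i < 4 * s"
        let ?u = "ring s i1 i2 J i" and ?v = "ring s i1 i2 J (Suc i)"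
        have d1: "dist ?u ?v = 1" using ring_step[OF i12 s1 i] .
        then have "?u \<noteq> ?v" by auto
        moreover have "?u \<in> S" "?v \<in> S" using ringS[OF J] i by simp_all
        ultimately have "graph_dist E ?u ?v / ereal (dist ?u ?v) < ereal T" using ratio by blast
        then have "graph_dist E ?u ?v < ereal T" using d1 by (simp add: one_ereal_def[symmetric])
        then obtain x where "x \<in> {ereal (walk_length p) | p. is_walk E p ?u ?v}" "x < ereal T"
          unfolding graph_dist_def by (auto simp: Inf_less_iff)
        then show "\<exists>p. is_walk E p ?u ?v \<and> walk_length p < T" by auto
      qed
      show "\<exists>e\<in>E. e \<subseteq> Ureg s i1 i2 T J \<and> (\<exists>a b. e = {a,b} \<and> conn ({e'\<in>E. e' \<subseteq> Ureg s i1 i2 T J} - {e}) a b)"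
        using ring_cyc[OF i12 s1 Ts finE Eab walks] by blast
    qed
    have disj: "\<forall>J\<in>Js. \<forall>J'\<in>Js. J \<noteq> J' \<longrightarrow> Ureg s i1 i2 T J \<inter> Ureg s i1 i2 T J' = {}"
    proof (intro ballI impI)
      fix J J' :: "'d \<Rightarrow> nat" assume "J \<noteq> J'"
      then obtain k where "J k \<noteq> J' k" by (auto simp: fun_eq_iff)
      then show "Ureg s i1 i2 T J \<inter> Ureg s i1 i2 T J' = {}" using Ureg_disj[OF Ts] by blast
    qed
    have "S \<noteq> {}" using S(3) npos by auto
    then obtain r0 where r0: "r0 \<in> S" by blast
    have "card S - 1 + card Js \<le> card E"
      by (rule assemble[OF r0 E(1) finE connE finJs disj cyc])
    moreover have "1 \<le> m ^ CARD('d)" using m1 by simp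
    ultimately show False using E(2) cardJs by linarith
  qed
  have "ereal T \<le> min_dilation S (m ^ CARD('d) - 1)"
    unfolding min_dilation_def using main S(3) by (intro Inf_greatest) auto
  then show ?thesis using S unfolding T_def by blast
qed

end
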